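(* Let $\mathcal U$ be an ultrafilter on a set $I$ and let $(M_i)_{i\in I}$ be a family of pointed metric spaces. Define $T\colon (\mathrm{Lip}_0(M_i))_{\mathcal U}\rightarrow \mathrm{Lip}_0((M_i)_{\mathcal U})$ by \[ T\big((f_i)_{\mathcal U}\big)\big((x_i)_{\mathcal U}\big)=\lim_{\mathcal U,i} f_i(x_i). \] Then $T$ is a well-defined linear operator with $\|T\|\leq 1$, and $T\big(B_{(\mathrm{Lip}_0(M_i))_{\mathcal U}}\big)$ is a $1$-norming set for $\mathcal F((M_i)_{\mathcal U})$ (where $\mathrm{Lip}_0((M_i)_{\mathcal U})$ is identified with $\mathcal F((M_i)_{\mathcal U})^*$).
   Context: Ultraproduct of metric spaces: given a set $I$, an ultrafilter $\mathcal U$ on $I$ and metric spaces $(M_i,d_i)$ with distinguished points $0_i\in M_i$, let $\ell_\infty(M_i)=\{(x_i)_{i\in I}\in\prod_i M_i:\sup_i d_i(x_i,0_i)<\infty\}$ with pseudometric $d((x_i),(y_i))=\lim_{\mathcal U,i}d_i(x_i,y_i)$. The ultraproduct $(M_i)_{\mathcal U}$ is the metric quotient of $\ell_\infty(M_i)$ identifying points at distance $0$; the class of $(x_i)_{i\in I}$ is written $(x_i)_{\mathcal U}$, and $(M_i)_{\mathcal U}$ is pointed by $(0_i)_{\mathcal U}$. For normed spaces the distinguished point is $0$, and this gives the usual Banach space ultraproduct with norm $\|(x_i)_{\mathcal U}\|=\lim_{\mathcal U}\|x_i\|$. For a pointed metric space $M$ (base point $0$), $\mathrm{Lip}_0(M)$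 is the Banach space of real-valued Lipschitz functions on $M$ vanishing at $0$, normed by the Lipschitz constant; $\delta(x)\in\mathrm{Lip}_0(M)^*$ is evaluation at $x$; the Lipschitz-free space is $\mathcal F(M)=\overline{\mathrm{span}}\{\delta(x):x\in M\}\subset \mathrm{Lip}_0(M)^*$, and $\mathcal F(M)^*=\mathrm{Lip}_0(M)$. A set $A\subset X^*$ is $\lambda$-norming for a Banach space $X$ if $\sup_{x^*\in A\cap B_{X^*}}|x^*(x)|\geq \frac1\lambda\|x\|$ for all $x\in X$. *)

theory Defs
  imports "HOL-Analysis.Analysis"
begin

text \<open>An ultrafilter on the index type 'i (the index set I is the universe of 'i).\<close>
definition is_ultrafilter :: "'i filter \<Rightarrow> bool" where
  "is_ultrafilter U \<longleftrightarrow> U \<noteq> bot \<and>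
     (\<forall>A. eventually (\<lambda>i. i \<in> A) U \<or> eventually (\<lambda>i. i \<notin> A) U)"

text \<open>Functions are taken extensional (zero outside the carrier), so that Lip0 is a
  genuine vector space of functions.\<close>
definition Lip0 :: "'a set \<Rightarrow> ('a \<Rightarrow> 'a \<Rightarrow> real) \<Rightarrow> 'a \<Rightarrow> ('a \<Rightarrow> real) set" where
  "Lip0 M d z = {f. (\<forall>x. x \<notin> M \<longrightarrow> f x = 0) \<and> f z = 0 \<and>
                    (\<exists>L. \<forall>x\<in>M. \<forall>y\<in>M. \<bar>f x - f y\<bar> \<le> L * d x y)}"

definition lipnorm :: "'a set \<Rightarrow> ('a \<Rightarrow> 'a \<Rightarrow> real) \<Rightarrow> ('a \<Rightarrow> real) \<Rightarrow> real" where
  "lipnorm M d f = Sup (insert 0 {\<bar>f x - f y\<bar> / d x y | x y. x \<in> M \<and> y \<in> M \<and> x \<noteq> y})"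

definition dualnorm :: "'a set \<Rightarrow> ('a \<Rightarrow> 'a \<Rightarrow> real) \<Rightarrow> 'a \<Rightarrow> (('a \<Rightarrow> real) \<Rightarrow> real) \<Rightarrow> real" where
  "dualnorm M d z \<phi> = Sup {\<bar>\<phi> f\<bar> | f. f \<in> Lip0 M d z \<and> lipnorm M d f \<le> 1}"

definition Lip0_dual :: "'a set \<Rightarrow> ('a \<Rightarrow> 'a \<Rightarrow> real) \<Rightarrow> 'a \<Rightarrow> (('a \<Rightarrow> real) \<Rightarrow> real) set" where
  "Lip0_dual M d z = {\<phi>. (\<forall>f. f \<notin> Lip0 M d z \<longrightarrow> \<phi> f = 0) \<and>
      (\<forall>f\<in>Lip0 M d z. \<forall>g\<in>Lip0 M d z. \<forall>a b. \<phi> (\<lambda>x. a * f x + b * g x) = a * \<phi> f + b * \<phi> g) \<and>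
      (\<exists>C. \<forall>f\<in>Lip0 M d z. \<bar>\<phi> f\<bar> \<le> C * lipnorm M d f)}"

definition delta :: "'a set \<Rightarrow> ('a \<Rightarrow> 'a \<Rightarrow> real) \<Rightarrow> 'a \<Rightarrow> 'a \<Rightarrow> ('a \<Rightarrow> real) \<Rightarrow> real" where
  "delta M d z x = (\<lambda>f. if f \<in> Lip0 M d z then f x else 0)"

text \<open>F(M) = closed linear span of the delta(x), x in M, in Lip0(M)^*.\<close>
definition lip_free_space :: "'a set \<Rightarrow> ('a \<Rightarrow> 'a \<Rightarrow> real) \<Rightarrow> 'a \<Rightarrow> (('a \<Rightarrow> real) \<Rightarrow> real) set" where
  "lip_free_space M d z = {\<phi> \<in> Lip0_dual M d z. \<forall>e>0. \<exists>(S::nat set) a x. finite S \<and> x ` S \<subseteq> M \<and>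
      dualnorm M d z (\<lambda>f. \<phi> f - (\<Sum>k\<in>S. a k * delta M d z (x k) f)) < e}"

text \<open>A set A of elements of Lip0(M) = F(M)^* is lambda-norming for F(M)
  (f acts on \<phi> by \<phi> f).\<close>
definition norming :: "real \<Rightarrow> ('a \<Rightarrow> real) set \<Rightarrow> 'a set \<Rightarrow> ('a \<Rightarrow> 'a \<Rightarrow> real) \<Rightarrow> 'a \<Rightarrow> bool" where
  "norming lam A M d z \<longleftrightarrow> (\<forall>\<phi>\<in>lip_free_space M d z.
      Sup {\<bar>\<phi> f\<bar> | f. f \<in> A \<and> f \<in> Lip0 M d z \<and> lipnorm M d f \<le> 1} \<ge> dualnorm M d z \<phi> / lam)"

definition linf_pts :: "('i \<Rightarrow> 'a set) \<Rightarrow> ('i \<Rightarrow> 'a \<Rightarrow> 'a \<Rightarrow> real) \<Rightarrow> ('i \<Rightarrow> 'a) \<Rightarrow> ('i \<Rightarrow> 'a) set" where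
  "linf_pts M d z = {x. (\<forall>i. x i \<in> M i) \<and> (\<exists>C. \<forall>i. d i (x i) (z i) \<le> C)}"

definition upseudo :: "'i filter \<Rightarrow> ('i \<Rightarrow> 'a \<Rightarrow> 'a \<Rightarrow> real) \<Rightarrow> ('i \<Rightarrow> 'a) \<Rightarrow> ('i \<Rightarrow> 'a) \<Rightarrow> real" where
  "upseudo U d x y = Lim U (\<lambda>i. d i (x i) (y i))"

definition upt_class :: "'i filter \<Rightarrow> ('i \<Rightarrow> 'a set) \<Rightarrow> ('i \<Rightarrow> 'a \<Rightarrow> 'a \<Rightarrow> real) \<Rightarrow> ('i \<Rightarrow> 'a) \<Rightarrow> ('i \<Rightarrow> 'a) \<Rightarrow> ('i \<Rightarrow> 'a) set" where
  "upt_class U M d z x = {y \<in> linf_pts M d z. upseudo U d x y = 0}"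

definition upts :: "'i filter \<Rightarrow> ('i \<Rightarrow> 'a set) \<Rightarrow> ('i \<Rightarrow> 'a \<Rightarrow> 'a \<Rightarrow> real) \<Rightarrow> ('i \<Rightarrow> 'a) \<Rightarrow> ('i \<Rightarrow> 'a) set set" where
  "upts U M d z = upt_class U M d z ` linf_pts M d z"

definition udist :: "'i filter \<Rightarrow> ('i \<Rightarrow> 'a \<Rightarrow> 'a \<Rightarrow> real) \<Rightarrow> ('i \<Rightarrow> 'a) set \<Rightarrow> ('i \<Rightarrow> 'a) set \<Rightarrow> real" where
  "udist U d p q = upseudo U d (SOME x. x \<in> p) (SOME y. y \<in> q)"

definition ubase :: "'i filter \<Rightarrow> ('i \<Rightarrow> 'a set) \<Rightarrow> ('i \<Rightarrow> 'a \<Rightarrow> 'a \<Rightarrow> real) \<Rightarrow> ('i \<Rightarrow> 'a) \<Rightarrow> ('i \<Rightarrow> 'a) set" where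
  "ubase U M d z = upt_class U M d z z"

definition linf_lip :: "('i \<Rightarrow> 'a set) \<Rightarrow> ('i \<Rightarrow> 'a \<Rightarrow> 'a \<Rightarrow> real) \<Rightarrow> ('i \<Rightarrow> 'a) \<Rightarrow> ('i \<Rightarrow> 'a \<Rightarrow> real) set" where
  "linf_lip M d z = {F. (\<forall>i. F i \<in> Lip0 (M i) (d i) (z i)) \<and>
                        (\<exists>C. \<forall>i. lipnorm (M i) (d i) (F i) \<le> C)}"

definition ulip_class :: "'i filter \<Rightarrow> ('i \<Rightarrow> 'a set) \<Rightarrow> ('i \<Rightarrow> 'a \<Rightarrow> 'a \<Rightarrow> real) \<Rightarrow> ('i \<Rightarrow> 'a) \<Rightarrow> ('i \<Rightarrow> 'a \<Rightarrow> real) \<Rightarrow> ('i \<Rightarrow> 'a \<Rightarrow> real) set" where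
  "ulip_class U M d z F = {G \<in> linf_lip M d z.
       Lim U (\<lambda>i. lipnorm (M i) (d i) (\<lambda>x. F i x - G i x)) = 0}"

definition ulip :: "'i filter \<Rightarrow> ('i \<Rightarrow> 'a set) \<Rightarrow> ('i \<Rightarrow> 'a \<Rightarrow> 'a \<Rightarrow> real) \<Rightarrow> ('i \<Rightarrow> 'a) \<Rightarrow> ('i \<Rightarrow> 'a \<Rightarrow> real) set set" where
  "ulip U M d z = ulip_class U M d z ` linf_lip M d z"

definition ulip_norm :: "'i filter \<Rightarrow> ('i \<Rightarrow> 'a set) \<Rightarrow> ('i \<Rightarrow> 'a \<Rightarrow> 'a \<Rightarrow> real) \<Rightarrow> ('i \<Rightarrow> 'a \<Rightarrow> real) set \<Rightarrow> real" where
  "ulip_norm U M d X = Lim U (\<lambda>i. lipnorm (M i) (d i) ((SOME F. F \<in> X) i))"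

definition Top :: "'i filter \<Rightarrow> ('i \<Rightarrow> 'a set) \<Rightarrow> ('i \<Rightarrow> 'a \<Rightarrow> 'a \<Rightarrow> real) \<Rightarrow> ('i \<Rightarrow> 'a) \<Rightarrow>
    ('i \<Rightarrow> 'a \<Rightarrow> real) set \<Rightarrow> ('i \<Rightarrow> 'a) set \<Rightarrow> real" where
  "Top U M d z X p = (if X \<in> ulip U M d z \<and> p \<in> upts U M d z
      then Lim U (\<lambda>i. (SOME F. F \<in> X) i ((SOME x. x \<in> p) i)) else 0)"

end

theory Submission imports Defs begin

lemma ultra_conv:
  fixes f :: "'i \<Rightarrow> real"
  assumes U: "is_ultrafilter U" and b: "\<And>i. \<bar>f i\<bar> \<le> C"
  shows "\<exists>l. (f \<longlongrightarrow> l) U"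
proof -
  have nb: "U \<noteq> bot" using U by (simp add: is_ultrafilter_def)
  have "compact {-C..C}" by simp
  moreover have "filtermap f U \<noteq> bot" using nb by (simp add: filtermap_bot_iff)
  moreover have "\<And>i. -C \<le> f i \<and> f i \<le> C" using b by (metis abs_le_iff minus_le_iff)
  then have "eventually (\<lambda>x. x \<in> {-C..C}) (filtermap f U)"
    by (auto simp: eventually_filtermap intro!: always_eventually)
  ultimately obtain l where l: "inf (nhds l) (filtermap f U) \<noteq> bot"
    unfolding compact_filter by blast
  have "(f \<longlongrightarrow> l) U"
  proof (rule topological_tendstoI)
    fix S assume S: "open S" "l \<in> S"
    show "eventually (\<lambda>i. f i \<in> S) U"
    proof (rule ccontr)
      assume "\<not> eventually (\<lambda>i. f i \<in> S) U"
      then have "eventually (\<lambda>i. i \<notin> f -` S) U"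
        using U unfolding is_ultrafilter_def by (metis (mono_tags, lifting) eventually_mono vimage_eq)
      then have e2: "eventually (\<lambda>x. x \<notin> S) (filtermap f U)" by (simp add: eventually_filtermap)
      have e1: "eventually (\<lambda>x. x \<in> S) (nhds l)" using S eventually_nhds by blast
      have "eventually (\<lambda>x. False) (inf (nhds l) (filtermap f U))"
        unfolding eventually_inf using e1 e2 by blast
      then show False using l by (simp add: trivial_limit_def)
    qed
  qed
  then show ?thesis by blast
qed

lemma lip_bdd:
  fixes f :: "'a \<Rightarrow> real"
  assumes "\<forall>x\<in>A. \<forall>y\<in>A. \<bar>f x - f y\<bar> \<le> L * dd x y"
  shows "bdd_above (insert 0 {\<bar>f x - f y\<bar> / dd x y | x y. x \<in> A \<and> y \<in> A \<and> x \<noteq> y})"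
proof (rule bdd_aboveI[where M="\<bar>L\<bar>"])
  fix r assume "r \<in> insert 0 {\<bar>f x - f y\<bar> / dd x y | x y. x \<in> A \<and> y \<in> A \<and> x \<noteq> y}"
  then consider "r = 0" | x y where "x \<in> A" "y \<in> A" "r = \<bar>f x - f y\<bar> / dd x y" by blast
  then show "r \<le> \<bar>L\<bar>"
  proof cases
    case 2
    have h: "\<bar>f x - f y\<bar> \<le> L * dd x y" using assms 2 by blast
    show ?thesis
    proof (cases "dd x y > 0")
      case True
      then have "\<bar>f x - f y\<bar> / dd x y \<le> L" using h by (simp add: pos_divide_le_eq[OF True])
      then show ?thesis using 2 by linarith
    next
      case False
      then have "\<bar>f x - f y\<bar> / dd x y \<le> 0"
        by (simp add: divide_nonneg_nonpos)
      then show ?thesis using 2 by linarith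
    qed
  qed simp
qed

lemma lip_nn:
  assumes "\<forall>x\<in>A. \<forall>y\<in>A. \<bar>f x - f y\<bar> \<le> L * dd x y"
  shows "0 \<le> lipnorm A dd f"
  unfolding lipnorm_def by (rule cSup_upper[OF _ lip_bdd[OF assms]]) simp

lemma lip_le:
  assumes "\<forall>x\<in>A. \<forall>y\<in>A. \<bar>f x - f y\<bar> \<le> L * dd x y" "\<forall>x\<in>A. \<forall>y\<in>A. 0 \<le> dd x y"
    and "x \<in> A" "y \<in> A"
  shows "\<bar>f x - f y\<bar> \<le> lipnorm A dd f * dd x y"
proof (cases "x = y")
  case True
  then show ?thesis using lip_nn[OF assms(1)] assms by simp
next
  case False
  show ?thesis
  proof (cases "dd x y = 0")
    case True
    then show ?thesis using assms by fastforce
  next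
    case F2: False
    then have pos: "dd x y > 0" using assms by force
    have "\<bar>f x - f y\<bar> / dd x y \<le> lipnorm A dd f"
      unfolding lipnorm_def
      by (rule cSup_upper[OF _ lip_bdd[OF assms(1)]]) (use assms False in blast)
    then show ?thesis using pos by (simp add: divide_le_eq)
  qed
qed

lemma lip_least:
  assumes "\<forall>x\<in>A. \<forall>y\<in>A. \<bar>f x - f y\<bar> \<le> L * dd x y" "0 \<le> L"
  shows "lipnorm A dd f \<le> L"
  unfolding lipnorm_def
proof (rule cSup_least)
  fix r assume "r \<in> insert 0 {\<bar>f x - f y\<bar> / dd x y | x y. x \<in> A \<and> y \<in> A \<and> x \<noteq> y}"
  then consider "r = 0" | x y where "x \<in> A" "y \<in> A" "r = \<bar>f x - f y\<bar> / dd x y" by blast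
  then show "r \<le> L"
  proof cases
    case 2
    have h: "\<bar>f x - f y\<bar> \<le> L * dd x y" using assms 2 by blast
    show ?thesis
    proof (cases "dd x y > 0")
      case True
      then show ?thesis using h 2 by (simp add: pos_divide_le_eq mult.commute)
    next
      case False
      then have "\<bar>f x - f y\<bar> / dd x y \<le> 0"
        by (simp add: divide_nonneg_nonpos)
      then show ?thesis using 2 assms by linarith
    qed
  qed (use assms in simp)
qed simp

lemma Lip0_lip: "f \<in> Lip0 A dd a \<Longrightarrow> \<exists>L. \<forall>x\<in>A. \<forall>y\<in>A. \<bar>f x - f y\<bar> \<le> L * dd x y"
  unfolding Lip0_def by blast

lemma Min_lip:
  fixes h h' :: "'k \<Rightarrow> real"
  assumes "finite S" "\<forall>k\<in>S. \<bar>h k - h' k\<bar> \<le> t" "\<bar>c - c'\<bar> \<le> t"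
  shows "\<bar>Min (insert c (h ` S)) - Min (insert c' (h' ` S))\<bar> \<le> t"
  using assms
proof (induction S rule: finite_induct)
  case empty then show ?case by simp
next
  case (insert k S)
  have e1: "Min (insert c (h ` insert k S)) = min (h k) (Min (insert c (h ` S)))"
  proof -
    have "insert c (h ` insert k S) = insert (h k) (insert c (h ` S))" by auto
    then show ?thesis using insert by (simp add: Min_insert)
  qed
  have e2: "Min (insert c' (h' ` insert k S)) = min (h' k) (Min (insert c' (h' ` S)))"
  proof -
    have "insert c' (h' ` insert k S) = insert (h' k) (insert c' (h' ` S))" by auto
    then show ?thesis using insert by (simp add: Min_insert)
  qed
  have "\<bar>Min (insert c (h ` S)) - Min (insert c' (h' ` S))\<bar> \<le> t" using insert by simp
  moreover have "\<bar>h k - h' k\<bar> \<le> t" using insert by simp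
  ultimately show ?case unfolding e1 e2 by (simp add: abs_le_iff min_def)
qed

lemma Min_tendsto:
  fixes h :: "'k \<Rightarrow> 'i \<Rightarrow> real"
  assumes "finite S" "\<forall>k\<in>S. (h k \<longlongrightarrow> l k) F" "(c \<longlongrightarrow> c0) F"
  shows "((\<lambda>i. Min (insert (c i) ((\<lambda>k. h k i) ` S))) \<longlongrightarrow> Min (insert c0 (l ` S))) F"
  using assms
proof (induction S rule: finite_induct)
  case empty then show ?case by simp
next
  case (insert k S)
  have e1: "\<And>i. Min (insert (c i) ((\<lambda>k. h k i) ` insert k S)) = min (h k i) (Min (insert (c i) ((\<lambda>k. h k i) ` S)))"
  proof -
    fix i
    have "insert (c i) ((\<lambda>k. h k i) ` insert k S) = insert (h k i) (insert (c i) ((\<lambda>k. h k i) ` S))" by auto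
    then show "Min (insert (c i) ((\<lambda>k. h k i) ` insert k S)) = min (h k i) (Min (insert (c i) ((\<lambda>k. h k i) ` S)))" using insert by (simp add: Min_insert)
  qed
  have e2: "Min (insert c0 (l ` insert k S)) = min (l k) (Min (insert c0 (l ` S)))"
  proof -
    have "insert c0 (l ` insert k S) = insert (l k) (insert c0 (l ` S))" by auto
    then show ?thesis using insert by (simp add: Min_insert)
  qed
  show ?case unfolding e1 e2
    by (rule tendsto_min) (use insert in auto)
qed


locale UPC =
  fixes U :: "'i filter" and M :: "'i \<Rightarrow> 'a set" and d :: "'i \<Rightarrow> 'a \<Rightarrow> 'a \<Rightarrow> real"
    and z :: "'i \<Rightarrow> 'a"
  assumes U: "is_ultrafilter U"
    and met: "\<And>i. Metric_space (M i) (d i)"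
    and zM: "\<And>i. z i \<in> M i"
begin

lemma nb: "U \<noteq> bot" using U by (simp add: is_ultrafilter_def)

lemma Lim_eq: "(f \<longlongrightarrow> l) U \<Longrightarrow> Lim U f = l"
  using nb by (simp add: tendsto_Lim)

lemma dnn: "0 \<le> d i x y" by (rule Metric_space.nonneg[OF met])
lemma dcomm: "d i x y = d i y x" by (rule Metric_space.commute[OF met])
lemma d0: "x \<in> M i \<Longrightarrow> d i x x = 0" using Metric_space.zero[OF met] by blast
lemma dtri: "x \<in> M i \<Longrightarrow> y \<in> M i \<Longrightarrow> w \<in> M i \<Longrightarrow> d i x w \<le> d i x y + d i y w"
  by (rule Metric_space.triangle[OF met])
lemma dlip: "x \<in> M i \<Longrightarrow> y \<in> M i \<Longrightarrow> w \<in> M i \<Longrightarrow> \<bar>d i x w - d i y w\<bar> \<le> d i x y"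
  using dtri[of x i y w] dtri[of y i x w] dcomm[of i x y] by linarith

lemma conv:
  fixes f :: "'i \<Rightarrow> real"
  assumes "\<And>i. \<bar>f i\<bar> \<le> C" shows "(f \<longlongrightarrow> Lim U f) U"
proof -
  obtain l where "(f \<longlongrightarrow> l) U" using ultra_conv[OF U, of f C] assms by blast
  then show ?thesis using Lim_eq[of f l] by simp
qed

lemma pts_in: "x \<in> linf_pts M d z \<Longrightarrow> x i \<in> M i"
  unfolding linf_pts_def by blast

lemma pts_bd: "x \<in> linf_pts M d z \<Longrightarrow> \<exists>C. \<forall>i. d i (x i) (z i) \<le> C"
  unfolding linf_pts_def by blast

lemma z_pts: "z \<in> linf_pts M d z"
  unfolding linf_pts_def using zM d0 by auto

lemma dseq_bd:
  assumes "x \<in> linf_pts M d z" "y \<in> linf_pts M d z"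
  shows "\<exists>C. \<forall>i. \<bar>d i (x i) (y i)\<bar> \<le> C"
proof -
  obtain C1 C2 where c: "\<forall>i. d i (x i) (z i) \<le> C1" "\<forall>i. d i (y i) (z i) \<le> C2"
    using pts_bd assms by metis
  have "\<bar>d i (x i) (y i)\<bar> \<le> C1 + C2" for i
    using dtri[OF pts_in[OF assms(1)] zM pts_in[OF assms(2)], of i] dcomm[of i "z i" "y i"] c dnn[of i]
    by (metis abs_of_nonneg add_mono order_trans)
  then show ?thesis by blast
qed

lemma up_conv:
  assumes "x \<in> linf_pts M d z" "y \<in> linf_pts M d z"
  shows "((\<lambda>i. d i (x i) (y i)) \<longlongrightarrow> upseudo U d x y) U"
  unfolding upseudo_def using dseq_bd[OF assms] conv by metis

lemma up_nn: "x \<in> linf_pts M d z \<Longrightarrow> y \<in> linf_pts M d z \<Longrightarrow> 0 \<le> upseudo U d x y"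
  using tendsto_lowerbound[OF up_conv _ nb] dnn by (simp add: always_eventually)

lemma up_comm: "upseudo U d x y = upseudo U d y x"
  unfolding upseudo_def using dcomm by metis

lemma up_tri:
  assumes "x \<in> linf_pts M d z" "y \<in> linf_pts M d z" "w \<in> linf_pts M d z"
  shows "upseudo U d x w \<le> upseudo U d x y + upseudo U d y w"
  by (rule tendsto_le[OF nb tendsto_add[OF up_conv[OF assms(1,2)] up_conv[OF assms(2,3)]] up_conv[OF assms(1,3)]])
     (use dtri pts_in assms in \<open>auto intro!: always_eventually\<close>)

lemma up_self: "x \<in> linf_pts M d z \<Longrightarrow> upseudo U d x x = 0"
  unfolding upseudo_def using d0 pts_in by (simp add: Lim_eq)

lemma up_inv:
  assumes "a \<in> linf_pts M d z" "b \<in> linf_pts M d z" "c \<in> linf_pts M d z" "upseudo U d a b = 0"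
  shows "upseudo U d a c = upseudo U d b c"
  using up_tri[OF assms(1,2,3)] up_tri[OF assms(2,1,3)] assms(4) up_comm[of a b] by linarith

lemma class_self: "x \<in> linf_pts M d z \<Longrightarrow> x \<in> upt_class U M d z x"
  unfolding upt_class_def using up_self by simp

lemma class_eq:
  assumes "x \<in> linf_pts M d z" "y \<in> linf_pts M d z" "upseudo U d x y = 0"
  shows "upt_class U M d z x = upt_class U M d z y"
  unfolding upt_class_def using up_inv[OF assms(1,2) _ assms(3)] by auto

definition "rep p = (SOME x. x \<in> p)"

lemma rep_class:
  assumes "x \<in> linf_pts M d z"
  shows "rep (upt_class U M d z x) \<in> linf_pts M d z"
    "upseudo U d x (rep (upt_class U M d z x)) = 0"
proof -
  have "rep (upt_class U M d z x) \<in> upt_class U M d z x"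
    unfolding rep_def by (rule someI[of _ x]) (rule class_self[OF assms])
  then show "rep (upt_class U M d z x) \<in> linf_pts M d z"
    "upseudo U d x (rep (upt_class U M d z x)) = 0" unfolding upt_class_def by auto
qed

lemma udist_class:
  assumes "x \<in> linf_pts M d z" "y \<in> linf_pts M d z"
  shows "udist U d (upt_class U M d z x) (upt_class U M d z y) = upseudo U d x y"
proof -
  let ?x = "rep (upt_class U M d z x)" and ?y = "rep (upt_class U M d z y)"
  have "udist U d (upt_class U M d z x) (upt_class U M d z y) = upseudo U d ?x ?y"
    unfolding udist_def rep_def ..
  also have "\<dots> = upseudo U d x ?y"
    using up_inv[OF assms(1) rep_class(1)[OF assms(1)] rep_class(1)[OF assms(2)] rep_class(2)[OF assms(1)]]
    by simp
  also have "\<dots> = upseudo U d ?y x" by (rule up_comm)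
  also have "\<dots> = upseudo U d y x"
    using up_inv[OF assms(2) rep_class(1)[OF assms(2)] assms(1) rep_class(2)[OF assms(2)]]
    by simp
  finally show ?thesis using up_comm by metis
qed

lemma upts_cases:
  assumes "p \<in> upts U M d z"
  obtains x where "x \<in> linf_pts M d z" "p = upt_class U M d z x"
  using assms unfolding upts_def by blast

lemma udist_nn: "p \<in> upts U M d z \<Longrightarrow> q \<in> upts U M d z \<Longrightarrow> 0 \<le> udist U d p q"
  by (metis upts_cases udist_class up_nn)

lemma lin_Lip0: "F \<in> linf_lip M d z \<Longrightarrow> F i \<in> Lip0 (M i) (d i) (z i)"
  unfolding linf_lip_def by blast

lemma lin_bd: "F \<in> linf_lip M d z \<Longrightarrow> \<exists>C. \<forall>i. lipnorm (M i) (d i) (F i) \<le> C"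
  unfolding linf_lip_def by blast

lemma lin_le:
  assumes "F \<in> linf_lip M d z" "x \<in> M i" "y \<in> M i"
  shows "\<bar>F i x - F i y\<bar> \<le> lipnorm (M i) (d i) (F i) * d i x y"
proof -
  obtain L where L: "\<forall>x\<in>M i. \<forall>y\<in>M i. \<bar>F i x - F i y\<bar> \<le> L * d i x y"
    using Lip0_lip[OF lin_Lip0[OF assms(1)]] by blast
  show ?thesis by (rule lip_le[OF L _ assms(2,3)]) (simp add: dnn)
qed

lemma lin_nn: "F \<in> linf_lip M d z \<Longrightarrow> 0 \<le> lipnorm (M i) (d i) (F i)"
proof -
  assume F: "F \<in> linf_lip M d z"
  obtain L where L: "\<forall>x\<in>M i. \<forall>y\<in>M i. \<bar>F i x - F i y\<bar> \<le> L * d i x y"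
    using Lip0_lip[OF lin_Lip0[OF F]] by blast
  show ?thesis by (rule lip_nn[OF L])
qed

lemma lin_z: "F \<in> linf_lip M d z \<Longrightarrow> F i (z i) = 0"
  using lin_Lip0 unfolding Lip0_def by blast

lemma lin_val_bd:
  assumes "F \<in> linf_lip M d z" "x \<in> linf_pts M d z"
  shows "\<exists>C. \<forall>i. \<bar>F i (x i)\<bar> \<le> C"
proof -
  obtain C1 where c1: "\<forall>i. lipnorm (M i) (d i) (F i) \<le> C1" using lin_bd[OF assms(1)] by blast
  obtain C2 where c2: "\<forall>i. d i (x i) (z i) \<le> C2" using pts_bd[OF assms(2)] by blast
  have "\<bar>F i (x i)\<bar> \<le> C1 * C2" for i
  proof -
    have "\<bar>F i (x i)\<bar> = \<bar>F i (x i) - F i (z i)\<bar>" using lin_z[OF assms(1)] by simp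
    also have "\<dots> \<le> lipnorm (M i) (d i) (F i) * d i (x i) (z i)"
      by (rule lin_le[OF assms(1) pts_in[OF assms(2)] zM])
    also have "\<dots> \<le> C1 * C2"
      by (rule mult_mono[OF c1[rule_format] c2[rule_format] order_trans[OF lin_nn[OF assms(1)] c1[rule_format]] dnn])
    finally show ?thesis .
  qed
  then show ?thesis by blast
qed

lemma diff_lip:
  assumes "F \<in> linf_lip M d z" "G \<in> linf_lip M d z"
  shows "\<forall>x\<in>M i. \<forall>y\<in>M i. \<bar>(F i x - G i x) - (F i y - G i y)\<bar>
      \<le> (lipnorm (M i) (d i) (F i) + lipnorm (M i) (d i) (G i)) * d i x y"
proof (intro ballI)
  fix x y assume xy: "x \<in> M i" "y \<in> M i"
  have "\<bar>(F i x - G i x) - (F i y - G i y)\<bar> \<le> \<bar>F i x - F i y\<bar> + \<bar>G i x - G i y\<bar>" by linarith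
  also have "\<dots> \<le> lipnorm (M i) (d i) (F i) * d i x y + lipnorm (M i) (d i) (G i) * d i x y"
    using lin_le[OF assms(1) xy] lin_le[OF assms(2) xy] by linarith
  finally show "\<bar>(F i x - G i x) - (F i y - G i y)\<bar>
      \<le> (lipnorm (M i) (d i) (F i) + lipnorm (M i) (d i) (G i)) * d i x y"
    by (simp add: distrib_right)
qed

lemma D_props:
  assumes "F \<in> linf_lip M d z" "G \<in> linf_lip M d z"
  shows "\<exists>C. \<forall>i. \<bar>lipnorm (M i) (d i) (\<lambda>x. F i x - G i x)\<bar> \<le> C"
proof -
  obtain C1 where c1: "\<forall>i. lipnorm (M i) (d i) (F i) \<le> C1" using lin_bd[OF assms(1)] by blast
  obtain C2 where c2: "\<forall>i. lipnorm (M i) (d i) (G i) \<le> C2" using lin_bd[OF assms(2)] by blast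
  have "\<bar>lipnorm (M i) (d i) (\<lambda>x. F i x - G i x)\<bar> \<le> C1 + C2" for i
  proof -
    have a: "0 \<le> lipnorm (M i) (d i) (\<lambda>x. F i x - G i x)"
      by (rule lip_nn) (rule diff_lip[OF assms])
    have b: "lipnorm (M i) (d i) (\<lambda>x. F i x - G i x) \<le> lipnorm (M i) (d i) (F i) + lipnorm (M i) (d i) (G i)"
      by (rule lip_least[OF diff_lip[OF assms] add_nonneg_nonneg[OF lin_nn[OF assms(1)] lin_nn[OF assms(2)]]])
    show ?thesis using abs_of_nonneg[OF a] b c1[rule_format, of i] c2[rule_format, of i] by linarith
  qed
  then show ?thesis by blast
qed

lemma coreA:
  assumes F: "F \<in> linf_lip M d z" and G: "G \<in> ulip_class U M d z F"
    and x: "x \<in> linf_pts M d z" and y: "y \<in> upt_class U M d z x"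
  shows "((\<lambda>i. F i (x i) - G i (y i)) \<longlongrightarrow> 0) U"
proof -
  have G': "G \<in> linf_lip M d z" and GL: "Lim U (\<lambda>i. lipnorm (M i) (d i) (\<lambda>x. F i x - G i x)) = 0"
    using G unfolding ulip_class_def by auto
  have y': "y \<in> linf_pts M d z" and yL: "upseudo U d x y = 0" using y unfolding upt_class_def by auto
  let ?D = "\<lambda>i. lipnorm (M i) (d i) (\<lambda>x. F i x - G i x)"
  have Dt: "(?D \<longlongrightarrow> 0) U"
  proof -
    obtain C where "\<forall>i. \<bar>?D i\<bar> \<le> C" using D_props[OF F G'] by blast
    then have "(?D \<longlongrightarrow> Lim U ?D) U" by (intro conv) blast
    then show ?thesis using GL by simp
  qed
  have dt: "((\<lambda>i. d i (x i) (y i)) \<longlongrightarrow> 0) U" using up_conv[OF x y'] yL by simp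
  obtain C1 where c1: "\<forall>i. lipnorm (M i) (d i) (F i) \<le> C1" using lin_bd[OF F] by blast
  obtain C2 where c2: "\<forall>i. d i (y i) (z i) \<le> C2" using pts_bd[OF y'] by blast
  show ?thesis
  proof (rule Lim_null_comparison)
    show "((\<lambda>i. C1 * d i (x i) (y i) + ?D i * C2) \<longlongrightarrow> 0) U"
      using tendsto_add[OF tendsto_mult[OF tendsto_const dt] tendsto_mult[OF Dt tendsto_const]] by simp
    show "\<forall>\<^sub>F i in U. norm (F i (x i) - G i (y i)) \<le> C1 * d i (x i) (y i) + ?D i * C2"
    proof (intro always_eventually allI)
      fix i
      have xi: "x i \<in> M i" and yi: "y i \<in> M i" using x y' pts_in by auto
      have "\<bar>F i (x i) - F i (y i)\<bar> \<le> C1 * d i (x i) (y i)"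
        by (rule order_trans[OF lin_le[OF F xi yi] mult_right_mono[OF c1[rule_format] dnn]])
      moreover have "\<bar>(F i (y i) - G i (y i)) - (F i (z i) - G i (z i))\<bar> \<le> ?D i * d i (y i) (z i)"
        by (rule lip_le[OF diff_lip[OF F G'] _ yi zM]) (use dnn in auto)
      moreover have "?D i * d i (y i) (z i) \<le> ?D i * C2"
        by (rule mult_left_mono) (use c2 lip_nn[OF diff_lip[OF F G']] in auto)
      ultimately show "norm (F i (x i) - G i (y i)) \<le> C1 * d i (x i) (y i) + ?D i * C2"
        using lin_z[OF F, of i] lin_z[OF G', of i] by simp
    qed
  qed
qed

lemma lin_class_self: "F \<in> linf_lip M d z \<Longrightarrow> F \<in> ulip_class U M d z F"
proof -
  assume F: "F \<in> linf_lip M d z"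
  have "lipnorm (M i) (d i) (\<lambda>x. F i x - F i x) = 0" for i
  proof -
    have h: "\<forall>x\<in>M i. \<forall>y\<in>M i. \<bar>(F i x - F i x) - (F i y - F i y)\<bar> \<le> 0 * d i x y" by simp
    show ?thesis using lip_nn[OF h] lip_least[OF h] by simp
  qed
  then show ?thesis unfolding ulip_class_def using F Lim_eq[OF tendsto_const] by simp
qed

lemma Top_conv:
  assumes F: "F \<in> linf_lip M d z" and x: "x \<in> linf_pts M d z"
  shows "((\<lambda>i. F i (x i)) \<longlongrightarrow> Top U M d z (ulip_class U M d z F) (upt_class U M d z x)) U"
proof -
  let ?G = "SOME G. G \<in> ulip_class U M d z F" and ?y = "SOME y. y \<in> upt_class U M d z x"
  have G: "?G \<in> ulip_class U M d z F" by (rule someI[where x=F]) (rule lin_class_self[OF F])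
  have y: "?y \<in> upt_class U M d z x" by (rule someI[where x=x]) (rule class_self[OF x])
  obtain C where "\<forall>i. \<bar>F i (x i)\<bar> \<le> C" using lin_val_bd[OF F x] by blast
  then have l: "((\<lambda>i. F i (x i)) \<longlongrightarrow> Lim U (\<lambda>i. F i (x i))) U" by (intro conv) blast
  have "((\<lambda>i. F i (x i) - (F i (x i) - ?G i (?y i))) \<longlongrightarrow> Lim U (\<lambda>i. F i (x i)) - 0) U"
    by (rule tendsto_diff[OF l coreA[OF F G x y]])
  then have "((\<lambda>i. ?G i (?y i)) \<longlongrightarrow> Lim U (\<lambda>i. F i (x i))) U" by simp
  then have "Top U M d z (ulip_class U M d z F) (upt_class U M d z x) = Lim U (\<lambda>i. F i (x i))"
    unfolding Top_def using F x Lim_eq unfolding ulip_def upts_def by auto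
  then show ?thesis using l by simp
qed

lemma Top_conv2:
  assumes F: "F \<in> linf_lip M d z" and G: "G \<in> ulip_class U M d z F" and x: "x \<in> linf_pts M d z"
  shows "((\<lambda>i. G i (x i)) \<longlongrightarrow> Top U M d z (ulip_class U M d z F) (upt_class U M d z x)) U"
  using tendsto_diff[OF Top_conv[OF F x] coreA[OF F G x class_self[OF x]]] by simp

end


context UPC begin

lemma ulip_cases:
  assumes "X \<in> ulip U M d z"
  obtains F where "F \<in> linf_lip M d z" "X = ulip_class U M d z F"
  using assms unfolding ulip_def by blast

lemma ubase_eq: "ubase U M d z = upt_class U M d z z" unfolding ubase_def ..

lemma ubase_in: "ubase U M d z \<in> upts U M d z"
  unfolding ubase_eq upts_def using z_pts by blast

lemma part2:
  assumes X: "X \<in> ulip U M d z"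
  shows "Top U M d z X \<in> Lip0 (upts U M d z) (udist U d) (ubase U M d z)"
proof -
  obtain F where F: "F \<in> linf_lip M d z" and XF: "X = ulip_class U M d z F" using ulip_cases[OF X] .
  obtain C1 where c1: "\<forall>i. lipnorm (M i) (d i) (F i) \<le> C1" using lin_bd[OF F] by blast
  have out: "\<forall>p. p \<notin> upts U M d z \<longrightarrow> Top U M d z X p = 0" unfolding Top_def by simp
  have "((\<lambda>i. F i (z i)) \<longlongrightarrow> Top U M d z X (ubase U M d z)) U"
    using Top_conv[OF F z_pts] unfolding XF ubase_eq .
  moreover have "((\<lambda>i. F i (z i)) \<longlongrightarrow> 0) U" using lin_z[OF F] by simp
  ultimately have base: "Top U M d z X (ubase U M d z) = 0" using tendsto_unique[OF nb] by blast
  have lip: "\<forall>p\<in>upts U M d z. \<forall>q\<in>upts U M d z.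
     \<bar>Top U M d z X p - Top U M d z X q\<bar> \<le> C1 * udist U d p q"
  proof (intro ballI)
    fix p q assume p: "p \<in> upts U M d z" and q: "q \<in> upts U M d z"
    obtain x where x: "x \<in> linf_pts M d z" "p = upt_class U M d z x" using upts_cases[OF p] .
    obtain y where y: "y \<in> linf_pts M d z" "q = upt_class U M d z y" using upts_cases[OF q] .
    have t1: "((\<lambda>i. \<bar>F i (x i) - F i (y i)\<bar>) \<longlongrightarrow> \<bar>Top U M d z X p - Top U M d z X q\<bar>) U"
      using tendsto_rabs[OF tendsto_diff[OF Top_conv[OF F x(1)] Top_conv[OF F y(1)]]] XF x y by simp
    have t2: "((\<lambda>i. C1 * d i (x i) (y i)) \<longlongrightarrow> C1 * udist U d p q) U"
      using tendsto_mult[OF tendsto_const up_conv[OF x(1) y(1)]] udist_class[OF x(1) y(1)] x y by simp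
    show "\<bar>Top U M d z X p - Top U M d z X q\<bar> \<le> C1 * udist U d p q"
    proof (rule tendsto_le[OF nb t2 t1], intro always_eventually allI)
      fix i
      have xi: "x i \<in> M i" and yi: "y i \<in> M i" using x y pts_in by auto
      show "\<bar>F i (x i) - F i (y i)\<bar> \<le> C1 * d i (x i) (y i)"
        by (rule order_trans[OF lin_le[OF F xi yi] mult_right_mono[OF c1[rule_format] dnn]])
    qed
  qed
  show ?thesis unfolding Lip0_def using out base lip by blast
qed

lemma lipnorm_bd_seq:
  assumes G: "G \<in> linf_lip M d z"
  shows "((\<lambda>i. lipnorm (M i) (d i) (G i)) \<longlongrightarrow> Lim U (\<lambda>i. lipnorm (M i) (d i) (G i))) U"
proof -
  obtain C where c: "\<forall>i. lipnorm (M i) (d i) (G i) \<le> C" using lin_bd[OF G] by blast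
  have "\<bar>lipnorm (M i) (d i) (G i)\<bar> \<le> C" for i using c lin_nn[OF G, of i] by simp
  then show ?thesis by (rule conv)
qed

lemma part4:
  assumes X: "X \<in> ulip U M d z"
  shows "lipnorm (upts U M d z) (udist U d) (Top U M d z X) \<le> ulip_norm U M d X"
proof -
  obtain F where F: "F \<in> linf_lip M d z" and XF: "X = ulip_class U M d z F" using ulip_cases[OF X] .
  let ?G = "SOME G. G \<in> X"
  have G: "?G \<in> ulip_class U M d z F" unfolding XF by (rule someI[where x=F]) (rule lin_class_self[OF F])
  then have G': "?G \<in> linf_lip M d z" unfolding ulip_class_def by blast
  let ?N = "ulip_norm U M d X"
  have Nt: "((\<lambda>i. lipnorm (M i) (d i) (?G i)) \<longlongrightarrow> ?N) U"
    unfolding ulip_norm_def by (rule lipnorm_bd_seq[OF G'])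
  have Nnn: "0 \<le> ?N" using tendsto_lowerbound[OF Nt _ nb] lin_nn[OF G'] by (simp add: always_eventually)
  have lip: "\<forall>p\<in>upts U M d z. \<forall>q\<in>upts U M d z.
     \<bar>Top U M d z X p - Top U M d z X q\<bar> \<le> ?N * udist U d p q"
  proof (intro ballI)
    fix p q assume p: "p \<in> upts U M d z" and q: "q \<in> upts U M d z"
    obtain x where x: "x \<in> linf_pts M d z" "p = upt_class U M d z x" using upts_cases[OF p] .
    obtain y where y: "y \<in> linf_pts M d z" "q = upt_class U M d z y" using upts_cases[OF q] .
    have t1: "((\<lambda>i. \<bar>?G i (x i) - ?G i (y i)\<bar>) \<longlongrightarrow> \<bar>Top U M d z X p - Top U M d z X q\<bar>) U"
      using tendsto_rabs[OF tendsto_diff[OF Top_conv2[OF F G x(1)] Top_conv2[OF F G y(1)]]] XF x y by simp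
    have t2: "((\<lambda>i. lipnorm (M i) (d i) (?G i) * d i (x i) (y i)) \<longlongrightarrow> ?N * udist U d p q) U"
      using tendsto_mult[OF Nt up_conv[OF x(1) y(1)]] udist_class[OF x(1) y(1)] x y by simp
    show "\<bar>Top U M d z X p - Top U M d z X q\<bar> \<le> ?N * udist U d p q"
    proof (rule tendsto_le[OF nb t2 t1], intro always_eventually allI)
      fix i
      have xi: "x i \<in> M i" and yi: "y i \<in> M i" using x y pts_in by auto
      show "\<bar>?G i (x i) - ?G i (y i)\<bar> \<le> lipnorm (M i) (d i) (?G i) * d i (x i) (y i)"
        by (rule lin_le[OF G' xi yi])
    qed
  qed
  show ?thesis by (rule lip_least[OF lip Nnn])
qed

lemma lin_comb:
  assumes F: "F \<in> linf_lip M d z" and G: "G \<in> linf_lip M d z"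
  shows "(\<lambda>i x. a * F i x + b * G i x) \<in> linf_lip M d z"
proof -
  obtain C1 where c1: "\<forall>i. lipnorm (M i) (d i) (F i) \<le> C1" using lin_bd[OF F] by blast
  obtain C2 where c2: "\<forall>i. lipnorm (M i) (d i) (G i) \<le> C2" using lin_bd[OF G] by blast
  have lipi: "\<forall>x\<in>M i. \<forall>y\<in>M i. \<bar>(a * F i x + b * G i x) - (a * F i y + b * G i y)\<bar>
     \<le> (\<bar>a\<bar> * lipnorm (M i) (d i) (F i) + \<bar>b\<bar> * lipnorm (M i) (d i) (G i)) * d i x y" for i
  proof (intro ballI)
    fix x y assume xy: "x \<in> M i" "y \<in> M i"
    have "\<bar>(a * F i x + b * G i x) - (a * F i y + b * G i y)\<bar> \<le> \<bar>a\<bar> * \<bar>F i x - F i y\<bar> + \<bar>b\<bar> * \<bar>G i x - G i y\<bar>"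
    proof -
      have "(a * F i x + b * G i x) - (a * F i y + b * G i y) = a * (F i x - F i y) + b * (G i x - G i y)"
        by (simp add: algebra_simps)
      then show ?thesis using abs_triangle_ineq[of "a * (F i x - F i y)" "b * (G i x - G i y)"] by (simp add: abs_mult)
    qed
    also have "\<dots> \<le> \<bar>a\<bar> * (lipnorm (M i) (d i) (F i) * d i x y) + \<bar>b\<bar> * (lipnorm (M i) (d i) (G i) * d i x y)"
      by (intro add_mono mult_left_mono lin_le[OF F xy] lin_le[OF G xy]) auto
    finally show "\<bar>(a * F i x + b * G i x) - (a * F i y + b * G i y)\<bar>
     \<le> (\<bar>a\<bar> * lipnorm (M i) (d i) (F i) + \<bar>b\<bar> * lipnorm (M i) (d i) (G i)) * d i x y"
      by (simp add: algebra_simps)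
  qed
  have "(\<lambda>x. a * F i x + b * G i x) \<in> Lip0 (M i) (d i) (z i)" for i
    using lin_Lip0[OF F, of i] lin_Lip0[OF G, of i] lipi[of i] unfolding Lip0_def by auto
  moreover have "lipnorm (M i) (d i) (\<lambda>x. a * F i x + b * G i x) \<le> \<bar>a\<bar> * C1 + \<bar>b\<bar> * C2" for i
  proof -
    have "lipnorm (M i) (d i) (\<lambda>x. a * F i x + b * G i x)
       \<le> \<bar>a\<bar> * lipnorm (M i) (d i) (F i) + \<bar>b\<bar> * lipnorm (M i) (d i) (G i)"
      by (rule lip_least[OF lipi]) (use lin_nn[OF F] lin_nn[OF G] in simp)
    also have "\<dots> \<le> \<bar>a\<bar> * C1 + \<bar>b\<bar> * C2"
      by (intro add_mono mult_left_mono) (use c1 c2 in auto)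
    finally show ?thesis .
  qed
  ultimately show ?thesis unfolding linf_lip_def by blast
qed

lemma part3:
  assumes F: "F \<in> linf_lip M d z" and G: "G \<in> linf_lip M d z"
  shows "Top U M d z (ulip_class U M d z (\<lambda>i x. a * F i x + b * G i x))
          = (\<lambda>p. a * Top U M d z (ulip_class U M d z F) p + b * Top U M d z (ulip_class U M d z G) p)"
proof
  fix p
  let ?H = "\<lambda>i x. a * F i x + b * G i x"
  show "Top U M d z (ulip_class U M d z ?H) p
     = a * Top U M d z (ulip_class U M d z F) p + b * Top U M d z (ulip_class U M d z G) p"
  proof (cases "p \<in> upts U M d z")
    case True
    obtain x where x: "x \<in> linf_pts M d z" "p = upt_class U M d z x" using upts_cases[OF True] .
    have t1: "((\<lambda>i. ?H i (x i)) \<longlongrightarrow> Top U M d z (ulip_class U M d z ?H) p) U"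
      using Top_conv[OF lin_comb[OF F G] x(1)] x(2) by simp
    have t2: "((\<lambda>i. ?H i (x i)) \<longlongrightarrow> a * Top U M d z (ulip_class U M d z F) p + b * Top U M d z (ulip_class U M d z G) p) U"
      using tendsto_add[OF tendsto_mult[OF tendsto_const Top_conv[OF F x(1)]] tendsto_mult[OF tendsto_const Top_conv[OF G x(1)]]] x(2)
      by simp
    show ?thesis using tendsto_unique[OF nb t1 t2] .
  next
    case False
    then show ?thesis unfolding Top_def by simp
  qed
qed

end


context UPC begin

lemma ulip_norm_le:
  assumes H: "H \<in> linf_lip M d z" and B: "\<forall>i. lipnorm (M i) (d i) (H i) \<le> B"
  shows "ulip_norm U M d (ulip_class U M d z H) \<le> B"
proof -
  let ?X = "ulip_class U M d z H"
  let ?G = "SOME G. G \<in> ?X"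
  have G: "?G \<in> ?X" by (rule someI[where x=H]) (rule lin_class_self[OF H])
  then have G': "?G \<in> linf_lip M d z" and GL: "Lim U (\<lambda>i. lipnorm (M i) (d i) (\<lambda>x. H i x - ?G i x)) = 0"
    unfolding ulip_class_def by auto
  let ?D = "\<lambda>i. lipnorm (M i) (d i) (\<lambda>x. H i x - ?G i x)"
  have Dt: "(?D \<longlongrightarrow> 0) U"
  proof -
    obtain C where "\<forall>i. \<bar>?D i\<bar> \<le> C" using D_props[OF H G'] by blast
    then have "(?D \<longlongrightarrow> Lim U ?D) U" by (intro conv) blast
    then show ?thesis using GL by simp
  qed
  have Nt: "((\<lambda>i. lipnorm (M i) (d i) (?G i)) \<longlongrightarrow> ulip_norm U M d ?X) U"
    unfolding ulip_norm_def by (rule lipnorm_bd_seq[OF G'])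
  have "ulip_norm U M d ?X \<le> B + 0"
  proof (rule tendsto_le[OF nb tendsto_add[OF tendsto_const Dt] Nt], intro always_eventually allI)
    fix i
    have "lipnorm (M i) (d i) (?G i) \<le> lipnorm (M i) (d i) (H i) + ?D i"
    proof (rule lip_least)
      show "\<forall>x\<in>M i. \<forall>y\<in>M i. \<bar>?G i x - ?G i y\<bar> \<le> (lipnorm (M i) (d i) (H i) + ?D i) * d i x y"
      proof (intro ballI)
        fix x y assume xy: "x \<in> M i" "y \<in> M i"
        have "\<bar>?G i x - ?G i y\<bar> \<le> \<bar>H i x - H i y\<bar> + \<bar>(H i x - ?G i x) - (H i y - ?G i y)\<bar>" by linarith
        also have "\<dots> \<le> lipnorm (M i) (d i) (H i) * d i x y + ?D i * d i x y"
          by (rule add_mono[OF lin_le[OF H xy] lip_le[OF diff_lip[OF H G'] _ xy]]) (simp add: dnn)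
        finally show "\<bar>?G i x - ?G i y\<bar> \<le> (lipnorm (M i) (d i) (H i) + ?D i) * d i x y"
          by (simp add: distrib_right)
      qed
      show "0 \<le> lipnorm (M i) (d i) (H i) + ?D i"
        by (rule add_nonneg_nonneg[OF lin_nn[OF H] lip_nn[OF diff_lip[OF H G']]])
    qed
    then show "lipnorm (M i) (d i) (?G i) \<le> B + ?D i" using B[rule_format, of i] by linarith
  qed
  then show ?thesis by simp
qed

lemma f_lip1:
  assumes f: "f \<in> Lip0 (upts U M d z) (udist U d) (ubase U M d z)"
    and fn: "lipnorm (upts U M d z) (udist U d) f \<le> 1"
    and p: "p \<in> upts U M d z" and q: "q \<in> upts U M d z"
  shows "\<bar>f p - f q\<bar> \<le> udist U d p q"
proof -
  obtain L where L: "\<forall>x\<in>upts U M d z. \<forall>y\<in>upts U M d z. \<bar>f x - f y\<bar> \<le> L * udist U d x y"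
    using Lip0_lip[OF f] by blast
  have "\<bar>f p - f q\<bar> \<le> lipnorm (upts U M d z) (udist U d) f * udist U d p q"
    by (rule lip_le[OF L _ p q]) (use udist_nn in blast)
  also have "\<dots> \<le> 1 * udist U d p q"
    by (rule mult_right_mono[OF fn udist_nn[OF p q]])
  finally show ?thesis by simp
qed

lemma key_approx:
  assumes f: "f \<in> Lip0 (upts U M d z) (udist U d) (ubase U M d z)"
    and fn: "lipnorm (upts U M d z) (udist U d) f \<le> 1"
    and S: "finite S" and xS: "x ` S \<subseteq> upts U M d z"
  shows "\<exists>X\<in>ulip U M d z. ulip_norm U M d X \<le> 1 \<and> (\<forall>k\<in>S. Top U M d z X (x k) = f (x k))"
proof -
  define r where "r k = rep (x k)" for k
  define v where "v k = f (x k)" for k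
  have r: "r k \<in> linf_pts M d z" "x k = upt_class U M d z (r k)" if "k \<in> S" for k
  proof -
    have xk: "x k \<in> upts U M d z" using xS that by (rule image_subset_iff[THEN iffD1, rule_format])
    obtain w where w: "w \<in> linf_pts M d z" "x k = upt_class U M d z w"
      by (rule upts_cases[OF xk])
    show "r k \<in> linf_pts M d z" unfolding r_def w(2) by (rule rep_class(1)[OF w(1)])
    show "x k = upt_class U M d z (r k)" unfolding r_def w(2)
      by (rule class_eq[OF w(1) rep_class(1)[OF w(1)] rep_class(2)[OF w(1)]])
  qed
  define g where "g i y = Min (insert (d i y (z i)) ((\<lambda>k. v k + d i y (r k i)) ` S))" for i y
  define H where "H i y = (if y \<in> M i then g i y - g i (z i) else 0)" for i y
  have glip: "\<bar>g i y - g i y'\<bar> \<le> d i y y'" if "y \<in> M i" "y' \<in> M i" for i y y'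
    unfolding g_def
  proof (rule Min_lip[OF S, where h="\<lambda>k. v k + d i y (r k i)" and h'="\<lambda>k. v k + d i y' (r k i)"])
    show "\<forall>k\<in>S. \<bar>(v k + d i y (r k i)) - (v k + d i y' (r k i))\<bar> \<le> d i y y'"
    proof
      fix k assume k: "k \<in> S"
      have "\<bar>d i y (r k i) - d i y' (r k i)\<bar> \<le> d i y y'" by (rule dlip[OF that pts_in[OF r(1)[OF k]]])
      then show "\<bar>(v k + d i y (r k i)) - (v k + d i y' (r k i))\<bar> \<le> d i y y'" by simp
    qed
    show "\<bar>d i y (z i) - d i y' (z i)\<bar> \<le> d i y y'" using dlip[OF that zM] .
  qed
  have Hlip: "\<forall>y\<in>M i. \<forall>y'\<in>M i. \<bar>H i y - H i y'\<bar> \<le> 1 * d i y y'" for i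
    unfolding H_def using glip by simp
  have Hin: "H \<in> linf_lip M d z"
  proof -
    have "H i \<in> Lip0 (M i) (d i) (z i)" for i
    proof -
      have "\<forall>x. x \<notin> M i \<longrightarrow> H i x = 0" by (simp add: H_def)
      moreover have "H i (z i) = 0" using zM[of i] by (simp add: H_def)
      ultimately show ?thesis unfolding Lip0_def using Hlip[of i] by blast
    qed
    moreover have "lipnorm (M i) (d i) (H i) \<le> 1" for i by (rule lip_least[OF Hlip]) simp
    ultimately show ?thesis unfolding linf_lip_def by blast
  qed
  have Hn: "ulip_norm U M d (ulip_class U M d z H) \<le> 1"
    by (rule ulip_norm_le[OF Hin]) (intro allI lip_least[OF Hlip], simp)
  have zU: "ubase U M d z = upt_class U M d z z" by (rule ubase_eq)
  have fz: "f (ubase U M d z) = 0" using f unfolding Lip0_def by blast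
  have dU: "udist U d (x k) (x l) = upseudo U d (r k) (r l)" if "k \<in> S" "l \<in> S" for k l
    using udist_class[OF r(1)[OF that(1)] r(1)[OF that(2)]] r(2) that by simp
  have dUz: "udist U d (x k) (ubase U M d z) = upseudo U d (r k) z" if "k \<in> S" for k
    using udist_class[OF r(1)[OF that] z_pts] r(2)[OF that] zU by simp
  have dzU: "udist U d (ubase U M d z) (x k) = upseudo U d z (r k)" if "k \<in> S" for k
    using udist_class[OF z_pts r(1)[OF that]] r(2)[OF that] zU by simp
  have vals: "Top U M d z (ulip_class U M d z H) (x l) = f (x l)" if l: "l \<in> S" for l
  proof -
    have t0: "((\<lambda>i. H i (r l i)) \<longlongrightarrow> Top U M d z (ulip_class U M d z H) (x l)) U"
      using Top_conv[OF Hin r(1)[OF l]] r(2)[OF l] by simp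
    have e: "H i (r l i) = g i (r l i) - g i (z i)" for i
      using pts_in[OF r(1)[OF l]] unfolding H_def by simp
    have t1: "((\<lambda>i. g i (r l i)) \<longlongrightarrow> Min (insert (upseudo U d (r l) z) ((\<lambda>k. v k + upseudo U d (r l) (r k)) ` S))) U"
      unfolding g_def
    proof (rule Min_tendsto[OF S, where h="\<lambda>k i. v k + d i (r l i) (r k i)" and l="\<lambda>k. v k + upseudo U d (r l) (r k)"
          and c="\<lambda>i. d i (r l i) (z i)"])
      show "\<forall>k\<in>S. ((\<lambda>i. v k + d i (r l i) (r k i)) \<longlongrightarrow> v k + upseudo U d (r l) (r k)) U"
      proof
        fix k assume k: "k \<in> S"
        show "((\<lambda>i. v k + d i (r l i) (r k i)) \<longlongrightarrow> v k + upseudo U d (r l) (r k)) U"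
          by (rule tendsto_add[OF tendsto_const up_conv[OF r(1)[OF l] r(1)[OF k]]])
      qed
      show "((\<lambda>i. d i (r l i) (z i)) \<longlongrightarrow> upseudo U d (r l) z) U" by (rule up_conv[OF r(1)[OF l] z_pts])
    qed
    have t2: "((\<lambda>i. g i (z i)) \<longlongrightarrow> Min (insert (upseudo U d z z) ((\<lambda>k. v k + upseudo U d z (r k)) ` S))) U"
      unfolding g_def
    proof (rule Min_tendsto[OF S, where h="\<lambda>k i. v k + d i (z i) (r k i)" and l="\<lambda>k. v k + upseudo U d z (r k)"
          and c="\<lambda>i. d i (z i) (z i)"])
      show "\<forall>k\<in>S. ((\<lambda>i. v k + d i (z i) (r k i)) \<longlongrightarrow> v k + upseudo U d z (r k)) U"
      proof
        fix k assume k: "k \<in> S"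
        show "((\<lambda>i. v k + d i (z i) (r k i)) \<longlongrightarrow> v k + upseudo U d z (r k)) U"
          by (rule tendsto_add[OF tendsto_const up_conv[OF z_pts r(1)[OF k]]])
      qed
      show "((\<lambda>i. d i (z i) (z i)) \<longlongrightarrow> upseudo U d z z) U" by (rule up_conv[OF z_pts z_pts])
    qed
    have m1: "Min (insert (upseudo U d (r l) z) ((\<lambda>k. v k + upseudo U d (r l) (r k)) ` S)) = v l"
    proof (rule Min_eqI)
      show "finite (insert (upseudo U d (r l) z) ((\<lambda>k. v k + upseudo U d (r l) (r k)) ` S))" using S by simp
      show "v l \<in> insert (upseudo U d (r l) z) ((\<lambda>k. v k + upseudo U d (r l) (r k)) ` S)"
        using l up_self[OF r(1)[OF l]] by force
      fix y assume "y \<in> insert (upseudo U d (r l) z) ((\<lambda>k. v k + upseudo U d (r l) (r k)) ` S)"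
      then consider "y = upseudo U d (r l) z" | k where "k \<in> S" "y = v k + upseudo U d (r l) (r k)" by blast
      then show "v l \<le> y"
      proof cases
        case 1
        have "\<bar>f (x l) - f (ubase U M d z)\<bar> \<le> udist U d (x l) (ubase U M d z)"
          by (rule f_lip1[OF f fn]) (use xS l ubase_in in auto)
        then show ?thesis using 1 fz dUz[OF l] unfolding v_def by simp
      next
        case 2
        have "\<bar>f (x l) - f (x k)\<bar> \<le> udist U d (x l) (x k)"
          by (rule f_lip1[OF f fn]) (use xS l 2 in auto)
        then show ?thesis using 2 dU[OF l 2(1)] unfolding v_def by simp
      qed
    qed
    have m2: "Min (insert (upseudo U d z z) ((\<lambda>k. v k + upseudo U d z (r k)) ` S)) = 0"
    proof (rule Min_eqI)
      show "finite (insert (upseudo U d z z) ((\<lambda>k. v k + upseudo U d z (r k)) ` S))" using S by simp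
      show "0 \<in> insert (upseudo U d z z) ((\<lambda>k. v k + upseudo U d z (r k)) ` S)"
        using up_self[OF z_pts] by simp
      fix y assume "y \<in> insert (upseudo U d z z) ((\<lambda>k. v k + upseudo U d z (r k)) ` S)"
      then consider "y = upseudo U d z z" | k where "k \<in> S" "y = v k + upseudo U d z (r k)" by blast
      then show "0 \<le> y"
      proof cases
        case 1 then show ?thesis using up_self[OF z_pts] by simp
      next
        case 2
        have "\<bar>f (ubase U M d z) - f (x k)\<bar> \<le> udist U d (ubase U M d z) (x k)"
          by (rule f_lip1[OF f fn]) (use xS 2 ubase_in in auto)
        then show ?thesis using 2 fz dzU[OF 2(1)] unfolding v_def by simp
      qed
    qed
    have "((\<lambda>i. H i (r l i)) \<longlongrightarrow> v l - 0) U"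
      unfolding e using tendsto_diff[OF t1 t2] m1 m2 by simp
    then show ?thesis using tendsto_unique[OF nb t0] unfolding v_def by simp
  qed
  show ?thesis
    using Hin Hn vals unfolding ulip_def by blast
qed

end


context UPC begin

lemma part5:
  "norming 1 (Top U M d z ` {X \<in> ulip U M d z. ulip_norm U M d X \<le> 1})
          (upts U M d z) (udist U d) (ubase U M d z)"
  unfolding norming_def
proof (intro ballI)
  let ?MU = "upts U M d z" and ?dU = "udist U d" and ?zU = "ubase U M d z"
  let ?A = "Top U M d z ` {X \<in> ulip U M d z. ulip_norm U M d X \<le> 1}"
  fix \<phi> assume phi: "\<phi> \<in> lip_free_space ?MU ?dU ?zU"
  then have phid: "\<phi> \<in> Lip0_dual ?MU ?dU ?zU" unfolding lip_free_space_def by blast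
  obtain C where C: "\<forall>f\<in>Lip0 ?MU ?dU ?zU. \<bar>\<phi> f\<bar> \<le> C * lipnorm ?MU ?dU f"
    using phid unfolding Lip0_dual_def by blast
  have lnn: "0 \<le> lipnorm ?MU ?dU f" if "f \<in> Lip0 ?MU ?dU ?zU" for f
    using Lip0_lip[OF that] lip_nn by blast
  have phib: "\<bar>\<phi> f\<bar> \<le> \<bar>C\<bar>" if "f \<in> Lip0 ?MU ?dU ?zU" "lipnorm ?MU ?dU f \<le> 1" for f
  proof -
    have "C * lipnorm ?MU ?dU f \<le> \<bar>C\<bar> * lipnorm ?MU ?dU f" using lnn[OF that(1)]
      by (simp add: mult_right_mono)
    also have "\<dots> \<le> \<bar>C\<bar> * 1" by (rule mult_left_mono[OF that(2)]) simp
    finally show ?thesis using C[rule_format, OF that(1)] by linarith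
  qed
  let ?Ss = "{\<bar>\<phi> f\<bar> |f. f \<in> ?A \<and> f \<in> Lip0 ?MU ?dU ?zU \<and> lipnorm ?MU ?dU f \<le> 1}"
  have Ssb: "bdd_above ?Ss"
  proof (rule bdd_aboveI[where M="\<bar>C\<bar>"])
    fix r assume "r \<in> ?Ss"
    then obtain f where "r = \<bar>\<phi> f\<bar>" "f \<in> Lip0 ?MU ?dU ?zU" "lipnorm ?MU ?dU f \<le> 1" by blast
    then show "r \<le> \<bar>C\<bar>" using phib by simp
  qed
  have zero_in: "(\<lambda>_. 0) \<in> Lip0 ?MU ?dU ?zU" unfolding Lip0_def by (auto intro: exI[of _ 0])
  have zero_n: "lipnorm ?MU ?dU (\<lambda>_. 0) \<le> 1" using lip_least[of ?MU "\<lambda>_. 0" 0 ?dU] by simp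
  have main: "\<bar>\<phi> f\<bar> \<le> Sup ?Ss" if f: "f \<in> Lip0 ?MU ?dU ?zU" and fn: "lipnorm ?MU ?dU f \<le> 1" for f
  proof (rule field_le_epsilon)
    fix e :: real assume e: "0 < e"
    note ex = conjunct2[OF phi[unfolded lip_free_space_def mem_Collect_eq], rule_format, OF half_gt_zero[OF e]]
    obtain S :: "nat set" and a x where S: "finite S" and xS: "x ` S \<subseteq> ?MU"
      and dn: "dualnorm ?MU ?dU ?zU (\<lambda>f. \<phi> f - (\<Sum>k\<in>S. a k * delta ?MU ?dU ?zU (x k) f)) < e/2"
      using ex by iprover
    let ?psi = "\<lambda>f. \<phi> f - (\<Sum>k\<in>S. a k * delta ?MU ?dU ?zU (x k) f)"
    have dl: "delta ?MU ?dU ?zU (x k) g = g (x k)" if "g \<in> Lip0 ?MU ?dU ?zU" for g k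
      using that unfolding delta_def by simp
    have psib: "\<bar>?psi g\<bar> < e/2" if g: "g \<in> Lip0 ?MU ?dU ?zU" "lipnorm ?MU ?dU g \<le> 1" for g
    proof -
      let ?B = "\<bar>C\<bar> + (\<Sum>k\<in>S. \<bar>a k\<bar> * udist U d (x k) ?zU)"
      have bd: "\<bar>?psi h\<bar> \<le> ?B" if h: "h \<in> Lip0 ?MU ?dU ?zU" "lipnorm ?MU ?dU h \<le> 1" for h
      proof -
        have hz: "h ?zU = 0" using h unfolding Lip0_def by blast
        have "\<bar>\<Sum>k\<in>S. a k * delta ?MU ?dU ?zU (x k) h\<bar> \<le> (\<Sum>k\<in>S. \<bar>a k * delta ?MU ?dU ?zU (x k) h\<bar>)"
          by (rule sum_abs)
        also have "\<dots> \<le> (\<Sum>k\<in>S. \<bar>a k\<bar> * udist U d (x k) ?zU)"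
        proof (rule sum_mono)
          fix k assume k: "k \<in> S"
          have "\<bar>h (x k) - h ?zU\<bar> \<le> udist U d (x k) ?zU"
            by (rule f_lip1[OF h]) (use xS k ubase_in in auto)
          then show "\<bar>a k * delta ?MU ?dU ?zU (x k) h\<bar> \<le> \<bar>a k\<bar> * udist U d (x k) ?zU"
            using dl[OF h(1)] hz by (simp add: abs_mult mult_left_mono)
        qed
        finally show ?thesis using phib[OF h] by linarith
      qed
      have "\<bar>?psi g\<bar> \<le> dualnorm ?MU ?dU ?zU ?psi"
        unfolding dualnorm_def
      proof (rule cSup_upper)
        show "\<bar>?psi g\<bar> \<in> {\<bar>?psi f\<bar> |f. f \<in> Lip0 ?MU ?dU ?zU \<and> lipnorm ?MU ?dU f \<le> 1}"
          using g by blast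
        show "bdd_above {\<bar>?psi f\<bar> |f. f \<in> Lip0 ?MU ?dU ?zU \<and> lipnorm ?MU ?dU f \<le> 1}"
        proof (rule bdd_aboveI[where M="?B"])
          fix r assume "r \<in> {\<bar>?psi f\<bar> |f. f \<in> Lip0 ?MU ?dU ?zU \<and> lipnorm ?MU ?dU f \<le> 1}"
          then obtain h where "r = \<bar>?psi h\<bar>" "h \<in> Lip0 ?MU ?dU ?zU" "lipnorm ?MU ?dU h \<le> 1" by blast
          then show "r \<le> ?B" using bd by simp
        qed
      qed
      then show ?thesis using dn by linarith
    qed
    obtain X where X: "X \<in> ulip U M d z" "ulip_norm U M d X \<le> 1"
      and vals: "\<forall>k\<in>S. Top U M d z X (x k) = f (x k)"
      using key_approx[OF f fn S xS] by blast
    let ?g = "Top U M d z X"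
    have gL: "?g \<in> Lip0 ?MU ?dU ?zU" by (rule part2[OF X(1)])
    have gn: "lipnorm ?MU ?dU ?g \<le> 1" using part4[OF X(1)] X(2) by linarith
    have gA: "?g \<in> ?A" by (rule imageI) (use X in simp)
    have "\<bar>\<phi> ?g\<bar> \<in> ?Ss" by (rule CollectI, rule exI[of _ ?g]) (simp add: gA gL gn)
    then have gS: "\<bar>\<phi> ?g\<bar> \<le> Sup ?Ss" by (rule cSup_upper[OF _ Ssb])
    have sums: "(\<Sum>k\<in>S. a k * delta ?MU ?dU ?zU (x k) ?g) = (\<Sum>k\<in>S. a k * delta ?MU ?dU ?zU (x k) f)"
      by (rule sum.cong) (use dl[OF gL] dl[OF f] vals in auto)
    have "\<bar>?psi ?g\<bar> < e/2" by (rule psib[OF gL gn])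
    moreover have "\<bar>?psi f\<bar> < e/2" by (rule psib[OF f fn])
    ultimately have "\<bar>\<phi> f\<bar> \<le> \<bar>\<phi> ?g\<bar> + e" using sums by linarith
    then show "\<bar>\<phi> f\<bar> \<le> Sup ?Ss + e" using gS by linarith
  qed
  have "dualnorm ?MU ?dU ?zU \<phi> \<le> Sup ?Ss"
    unfolding dualnorm_def
  proof (rule cSup_least)
    show "{\<bar>\<phi> f\<bar> |f. f \<in> Lip0 ?MU ?dU ?zU \<and> lipnorm ?MU ?dU f \<le> 1} \<noteq> {}"
      using zero_in zero_n by blast
    fix r assume "r \<in> {\<bar>\<phi> f\<bar> |f. f \<in> Lip0 ?MU ?dU ?zU \<and> lipnorm ?MU ?dU f \<le> 1}"
    then obtain f where "r = \<bar>\<phi> f\<bar>" "f \<in> Lip0 ?MU ?dU ?zU" "lipnorm ?MU ?dU f \<le> 1" by blast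
    then show "r \<le> Sup ?Ss" using main by simp
  qed
  then show "dualnorm ?MU ?dU ?zU \<phi> / 1 \<le> Sup ?Ss" by simp
qed

end

theorem theorem3p1:
  fixes U :: "'i filter" and M :: "'i \<Rightarrow> 'a set" and d :: "'i \<Rightarrow> 'a \<Rightarrow> 'a \<Rightarrow> real"
    and z :: "'i \<Rightarrow> 'a"
  assumes "is_ultrafilter U"
    and "\<And>i. Metric_space (M i) (d i)"
    and "\<And>i. z i \<in> M i"
  shows
    \<comment> \<open>well-defined: the limit exists and does not depend on the representatives\<close>
    "(\<forall>F\<in>linf_lip M d z. \<forall>x\<in>linf_pts M d z.
        ((\<lambda>i. F i (x i)) \<longlongrightarrow> Top U M d z (ulip_class U M d z F) (upt_class U M d z x)) U)
     \<comment> \<open>T maps into Lip0 of the ultraproduct\<close>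
     \<and> (\<forall>X\<in>ulip U M d z. Top U M d z X \<in> Lip0 (upts U M d z) (udist U d) (ubase U M d z))
     \<comment> \<open>linearity\<close>
     \<and> (\<forall>F\<in>linf_lip M d z. \<forall>G\<in>linf_lip M d z. \<forall>a b::real.
          Top U M d z (ulip_class U M d z (\<lambda>i x. a * F i x + b * G i x))
          = (\<lambda>p. a * Top U M d z (ulip_class U M d z F) p + b * Top U M d z (ulip_class U M d z G) p))
     \<comment> \<open>norm at most one\<close>
     \<and> (\<forall>X\<in>ulip U M d z.
          lipnorm (upts U M d z) (udist U d) (Top U M d z X) \<le> ulip_norm U M d X)
     \<comment> \<open>T(B) is 1-norming for F((M_i)_U)\<close>
     \<and> norming 1 (Top U M d z ` {X \<in> ulip U M d z. ulip_norm U M d X \<le> 1})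
          (upts U M d z) (udist U d) (ubase U M d z)"
proof -
  interpret UPC U M d z by (rule UPC.intro[OF assms])
  have A1: "\<forall>F\<in>linf_lip M d z. \<forall>x\<in>linf_pts M d z.
        ((\<lambda>i. F i (x i)) \<longlongrightarrow> Top U M d z (ulip_class U M d z F) (upt_class U M d z x)) U"
    by (intro ballI) (rule Top_conv)
  have A2: "\<forall>X\<in>ulip U M d z. Top U M d z X \<in> Lip0 (upts U M d z) (udist U d) (ubase U M d z)"
    by (intro ballI) (rule part2)
  have A3: "\<forall>F\<in>linf_lip M d z. \<forall>G\<in>linf_lip M d z. \<forall>a b::real.
          Top U M d z (ulip_class U M d z (\<lambda>i x. a * F i x + b * G i x))
          = (\<lambda>p. a * Top U M d z (ulip_class U M d z F) p + b * Top U M d z (ulip_class U M d z G) p)"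
    by (intro ballI allI) (rule part3)
  have A4: "\<forall>X\<in>ulip U M d z.
          lipnorm (upts U M d z) (udist U d) (Top U M d z X) \<le> ulip_norm U M d X"
    by (intro ballI) (rule part4)
  show ?thesis by (intro conjI A1 A2 A3 A4 part5)
qed

end
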